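(* Let $\mathcal{N}$ be a Cassou-Nogu\`es ideal with $N=\#(\mathcal{O}/\mathcal{N})$, and let $U=\{u_1,\dots,u_r\}\subset\mathcal{O}$ be nonempty with each $u_j$ prime to $\mathcal{N}$. Then for every $x\in\mathcal{O}/\mathcal{N}$ and all integers $l_1,\dots,l_r\ge0$, $$\mathfrak{h}_U\Big(x+\sum_{j=1}^r l_ju_j\Big)=\mathfrak{h}_U(x)+\sum_{\emptyset\neq S\subseteq\{1,\dots,r\}}\ \sum_{\substack{0\le d_j<l_j\\ j\in S}}\mathfrak{h}_{U\setminus\{u_j\}_{j\in S}}\Big(x+\sum_{j\in S}d_ju_j\Big).$$
   Context: $F$ is a number field with ring of integers $\mathcal{O}$. A Cassou-Nogu\`es ideal is an integral ideal $\mathcal{N}\neq\mathcal{O}$ such that $\mathcal{O}/\mathcal{N}$ is cyclic as an additive group, i.e. $\mathcal{O}/\mathcal{N}\simeq\mathbf{Z}/N$ with $N=\#(\mathcal{O}/\mathcal{N})$. An element $u\in\mathcal{O}$ is prime to $\mathcal{N}$ if it is a unit modulo $\mathcal{N}$. For a nonempty $U=\{u_1,\dots,u_r\}\subset\mathcal{O}$, $\mathfrak{h}_U$ is the function on $\mathcal{O}/\mathcal{N}$ given by $\mathfrak{h}_U(a)=\frac{1}{N^{r-1}}\sum_{0\le d_1,\dots,d_r<N,\ d_1u_1+\dots+d_ru_r\equiv-a\bmod\mathcal{N}}d_1d_2\cdots d_r-\left(\frac{N-1}{2}\right)^r$, and $\mathfrak{h}_\emptyset(a)=N-1$ if $a\equiv0\bmod\mathcal{N}$,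 $\mathfrak{h}_\emptyset(a)=-1$ otherwise. *)

theory Defs
  imports Complex_Main "HOL-Library.FuncSet"
begin

text \<open>The ring of integers O is abstracted as a commutative ring 'a; an integral
ideal is a set of ring elements; residues mod the ideal are handled by congruence.\<close>

definition is_ideal :: "'a::comm_ring_1 set \<Rightarrow> bool" where
  "is_ideal I \<longleftrightarrow> 0 \<in> I \<and> (\<forall>x\<in>I. \<forall>y\<in>I. x + y \<in> I) \<and> (\<forall>x\<in>I. \<forall>a. a * x \<in> I)"

definition residue_classes :: "'a::comm_ring_1 set \<Rightarrow> 'a set set" where
  "residue_classes I = (\<lambda>x. {y. y - x \<in> I}) ` UNIV"

definition quot_card :: "'a::comm_ring_1 set \<Rightarrow> nat" where
  "quot_card I = card (residue_classes I)"

text \<open>Cassou-Nogues ideal: proper ideal with O/I finite and cyclic as additive group.\<close>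
definition cassou_nogues :: "'a::comm_ring_1 set \<Rightarrow> bool" where
  "cassou_nogues I \<longleftrightarrow> is_ideal I \<and> (1::'a) \<notin> I \<and> finite (residue_classes I) \<and>
     (\<exists>g. \<forall>x. \<exists>k::int. x - of_int k * g \<in> I)"

definition prime_to :: "'a::comm_ring_1 \<Rightarrow> 'a set \<Rightarrow> bool" where
  "prime_to u I \<longleftrightarrow> (\<exists>v. u * v - 1 \<in> I)"

text \<open>h_U for U = {u j | j \<in> J} (indexed by the finite index set J), evaluated at a.\<close>
definition hU :: "'a::comm_ring_1 set \<Rightarrow> (nat \<Rightarrow> 'a) \<Rightarrow> nat set \<Rightarrow> 'a \<Rightarrow> real" where
  "hU I u J a =
    (let N = quot_card I in
     if J = {} then (if a \<in> I then real N - 1 else -1)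
     else (\<Sum>d \<in> {d \<in> PiE J (\<lambda>_. {0..<N}). (\<Sum>j\<in>J. of_nat (d j) * u j) + a \<in> I}.
              (\<Prod>j\<in>J. real (d j))) / real N ^ (card J - 1)
          - ((real N - 1) / 2) ^ card J)"

end

theory Submission
  imports Defs
begin


lemma I_facts:
  assumes "is_ideal I"
  shows I0: "0 \<in> I" and I_add: "x \<in> I \<Longrightarrow> y \<in> I \<Longrightarrow> x + y \<in> I"
    and I_mult: "x \<in> I \<Longrightarrow> a * x \<in> I"
  using assms unfolding is_ideal_def by auto

lemma I_neg: "is_ideal I \<Longrightarrow> x \<in> I \<Longrightarrow> - x \<in> I"
  using I_mult[of I x "-1"] by simp

lemma I_diff: "is_ideal I \<Longrightarrow> x \<in> I \<Longrightarrow> y \<in> I \<Longrightarrow> x - y \<in> I"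
  using I_add[of I x "-y"] I_neg[of I y] by simp

lemma I_multr: "is_ideal I \<Longrightarrow> x \<in> I \<Longrightarrow> x * a \<in> I"
  using I_mult[of I x a] by (simp add: mult.commute)

lemma cls_eq:
  assumes "is_ideal I"
  shows "({y. y - x \<in> I} = {y. y - z \<in> I}) \<longleftrightarrow> x - z \<in> I"
proof
  assume "{y. y - x \<in> I} = {y. y - z \<in> I}"
  moreover have "x \<in> {y. y - x \<in> I}" using I0[OF assms] by simp
  ultimately show "x - z \<in> I" by auto
next
  assume h: "x - z \<in> I"
  { fix y assume "y - x \<in> I"
    from I_add[OF assms this h] have "y - z \<in> I" by simp }
  moreover
  { fix y assume "y - z \<in> I"
    from I_diff[OF assms this h] have "y - x \<in> I" by simp }
  ultimately show "{y. y - x \<in> I} = {y. y - z \<in> I}" by auto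
qed

lemma cassou_basic:
  fixes I :: "'a::comm_ring_1 set"
  assumes cn: "cassou_nogues I"
  shows "quot_card I > 0"
    and "\<And>y. of_nat (quot_card I) * y \<in> I"
    and "\<And>k. 0 < k \<Longrightarrow> k < quot_card I \<Longrightarrow> (of_nat k :: 'a) \<notin> I"
proof -
  have idl: "is_ideal I" and fin: "finite (residue_classes I)" using cn unfolding cassou_nogues_def by auto
  obtain g where g: "\<And>x. \<exists>k::int. x - of_int k * g \<in> I" using cn unfolding cassou_nogues_def by auto
  define n where "n = quot_card I"
  define cl where "cl = (\<lambda>x::'a. {y. y - x \<in> I})"
  have RC: "residue_classes I = cl ` UNIV" unfolding residue_classes_def cl_def by simp
  have cleq: "cl x = cl z \<longleftrightarrow> x - z \<in> I" for x z unfolding cl_def using cls_eq[OF idl] by blast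
  have ex: "\<exists>m>0. of_nat m * g \<in> I"
  proof -
    have "\<not> inj_on (\<lambda>k. cl (of_nat k * g)) {0..n}"
    proof
      assume "inj_on (\<lambda>k. cl (of_nat k * g)) {0..n}"
      from card_inj_on_le[OF this _ fin] have "card {0..n} \<le> n"
        unfolding n_def quot_card_def RC by auto
      thus False by simp
    qed
    then obtain i j where ij: "i \<in> {0..n}" "j \<in> {0..n}" "i \<noteq> j" "cl (of_nat i * g) = cl (of_nat j * g)"
      unfolding inj_on_def by blast
    hence d: "of_nat i * g - of_nat j * g \<in> I" "of_nat j * g - of_nat i * g \<in> I" using cleq by metis+
    show ?thesis
    proof (cases "i < j")
      case True
      have "of_nat (j - i) * g = of_nat j * g - of_nat i * g" using True by (simp add: of_nat_diff algebra_simps)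
      thus ?thesis using d True by (intro exI[of _ "j - i"]) auto
    next
      case False
      hence "j < i" using ij by auto
      hence "of_nat (i - j) * g = of_nat i * g - of_nat j * g" by (simp add: of_nat_diff algebra_simps)
      thus ?thesis using d \<open>j < i\<close> by (intro exI[of _ "i - j"]) auto
    qed
  qed
  define m where "m = (LEAST m. 0 < m \<and> of_nat m * g \<in> I)"
  have m: "0 < m" "of_nat m * g \<in> I" using LeastI_ex[OF ex] unfolding m_def by auto
  have mmin: "\<And>k. 0 < k \<Longrightarrow> k < m \<Longrightarrow> of_nat k * g \<notin> I"
    unfolding m_def using not_less_Least by blast
  have cover: "cl ` UNIV = (\<lambda>k. cl (of_nat k * g)) ` {0..<m}"
  proof (rule set_eqI, rule iffI)
    fix c assume "c \<in> cl ` UNIV"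
    then obtain x where c: "c = cl x" by auto
    obtain k :: int where k: "x - of_int k * g \<in> I" using g by blast
    define s where "s = nat (k mod int m)"
    have s: "s < m" "int s = k mod int m" using m(1) unfolding s_def by (auto simp: nat_less_iff)
    have "k = (k div int m) * int m + int s" using s(2) by simp
    hence "(of_int k :: 'a) = of_int (k div int m) * of_nat m + of_nat s"
      by (metis of_int_add of_int_mult of_int_of_nat_eq)
    hence "x - of_nat s * g = (x - of_int k * g) + of_int (k div int m) * (of_nat m * g)"
      by (simp add: algebra_simps)
    also have "\<dots> \<in> I" using I_add[OF idl k I_mult[OF idl m(2)]] .
    finally have "cl x = cl (of_nat s * g)" using cleq by blast
    thus "c \<in> (\<lambda>k. cl (of_nat k * g)) ` {0..<m}" using c s by auto
  qed auto
  have inj: "inj_on (\<lambda>k. cl (of_nat k * g)) {0..<m}"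
  proof (rule inj_onI)
    fix i j assume ij: "i \<in> {0..<m}" "j \<in> {0..<m}" "cl (of_nat i * g) = cl (of_nat j * g)"
    hence d: "of_nat i * g - of_nat j * g \<in> I" "of_nat j * g - of_nat i * g \<in> I" using cleq by metis+
    show "i = j"
    proof (rule ccontr)
      assume "i \<noteq> j"
      then consider "i < j" | "j < i" by linarith
      thus False
      proof cases
        case 1
        have "of_nat (j - i) * g = of_nat j * g - of_nat i * g" using 1 by (simp add: of_nat_diff algebra_simps)
        hence "of_nat (j - i) * g \<in> I" using d by simp
        moreover have "0 < j - i" "j - i < m" using 1 ij by auto
        ultimately show False using mmin by blast
      next
        case 2
        have "of_nat (i - j) * g = of_nat i * g - of_nat j * g" using 2 by (simp add: of_nat_diff algebra_simps)
        hence "of_nat (i - j) * g \<in> I" using d by simp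
        moreover have "0 < i - j" "i - j < m" using 2 ij by auto
        ultimately show False using mmin by blast
      qed
    qed
  qed
  have nm: "n = m" unfolding n_def quot_card_def RC cover using card_image[OF inj] by simp
  show "quot_card I > 0" using nm m n_def by simp
  show "of_nat (quot_card I) * y \<in> I" for y
  proof -
    obtain c :: int where c: "y - of_int c * g \<in> I" using g by blast
    have "of_nat n * y = of_nat n * (y - of_int c * g) + of_int c * (of_nat m * g)"
      using nm by (simp add: algebra_simps)
    also have "\<dots> \<in> I" using I_add[OF idl I_mult[OF idl c] I_mult[OF idl m(2)]] .
    finally show ?thesis unfolding n_def .
  qed
  show "(of_nat k :: 'a) \<notin> I" if "0 < k" "k < quot_card I" for k
  proof
    assume "(of_nat k :: 'a) \<in> I"
    from I_multr[OF idl this, of g] have "of_nat k * g \<in> I" .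
    thus False using mmin[of k] that nm n_def by auto
  qed
qed




locale cnl =
  fixes I :: "'a::comm_ring_1 set" and u :: "nat \<Rightarrow> 'a"
  assumes cn: "cassou_nogues I"
begin

abbreviation "n \<equiv> quot_card I"

lemma idl: "is_ideal I" using cn unfolding cassou_nogues_def by auto
lemma npos: "n > 0" using cassou_basic[OF cn] by auto
lemma nI: "of_nat n * y \<in> I" using cassou_basic[OF cn] by auto
lemma kI: "0 < k \<Longrightarrow> k < n \<Longrightarrow> (of_nat k :: 'a) \<notin> I" using cassou_basic[OF cn] by auto

lemma modeq:
  assumes "s mod n = t mod n"
  shows "of_nat s * y - of_nat t * y \<in> I"
proof -
  have "s = s div n * n + s mod n" "t = t div n * n + t mod n" by simp_all
  hence "(of_nat s :: 'a) = of_nat (s div n) * of_nat n + of_nat (s mod n)"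
        "(of_nat t :: 'a) = of_nat (t div n) * of_nat n + of_nat (t mod n)"
    by (metis of_nat_add of_nat_mult)+
  hence "of_nat s * y - of_nat t * y = of_nat (s div n) * (of_nat n * y) - of_nat (t div n) * (of_nat n * y)"
    using assms by (simp add: algebra_simps)
  also have "\<dots> \<in> I" using I_diff[OF idl I_mult[OF idl nI] I_mult[OF idl nI]] .
  finally show ?thesis .
qed

lemma unit_uniq:
  assumes pt: "prime_to v I" and d: "d < n" "d' < n" and h: "of_nat d * v - of_nat d' * v \<in> I"
  shows "d = d'"
proof -
  obtain w where w: "v * w - 1 \<in> I" using pt unfolding prime_to_def by auto
  have gen: "of_nat e \<in> I" if "of_nat e * v \<in> I" for e
  proof -
    have "(of_nat e :: 'a) = w * (of_nat e * v) - of_nat e * (v * w - 1)" by (simp add: algebra_simps)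
    also have "\<dots> \<in> I" using I_diff[OF idl I_mult[OF idl that] I_mult[OF idl w]] .
    finally show ?thesis .
  qed
  show ?thesis
  proof (rule ccontr)
    assume "d \<noteq> d'"
    then consider "d < d'" | "d' < d" by linarith
    thus False
    proof cases
      case 1
      have "of_nat (d' - d) * v = - (of_nat d * v - of_nat d' * v)" using 1 by (simp add: of_nat_diff algebra_simps)
      hence "of_nat (d' - d) * v \<in> I" using I_neg[OF idl h] by simp
      from gen[OF this] have "of_nat (d' - d) \<in> I" .
      moreover have "0 < d' - d" "d' - d < n" using 1 d by auto
      ultimately show False using kI by blast
    next
      case 2
      have "of_nat (d - d') * v = (of_nat d * v - of_nat d' * v)" using 2 by (simp add: of_nat_diff algebra_simps)
      hence "of_nat (d - d') * v \<in> I" using h by simp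
      from gen[OF this] have "of_nat (d - d') \<in> I" .
      moreover have "0 < d - d'" "d - d' < n" using 2 d by auto
      ultimately show False using kI by blast
    qed
  qed
qed

lemma unit_ex:
  assumes pt: "prime_to v I"
  shows "\<exists>d<n. of_nat d * v + b \<in> I"
proof -
  define cl where "cl = (\<lambda>x::'a. {y. y - x \<in> I})"
  have cleq: "cl x = cl z \<longleftrightarrow> x - z \<in> I" for x z unfolding cl_def using cls_eq[OF idl] by blast
  have fin: "finite (residue_classes I)" using cn unfolding cassou_nogues_def by auto
  have RC: "residue_classes I = cl ` UNIV" unfolding residue_classes_def cl_def by simp
  have inj: "inj_on (\<lambda>d. cl (of_nat d * v)) {0..<n}"
    by (rule inj_onI) (use unit_uniq[OF pt] cleq in auto)
  have sub: "(\<lambda>d. cl (of_nat d * v)) ` {0..<n} \<subseteq> residue_classes I" unfolding RC by auto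
  have "card ((\<lambda>d. cl (of_nat d * v)) ` {0..<n}) = card (residue_classes I)"
    using card_image[OF inj] unfolding quot_card_def by simp
  hence eq: "(\<lambda>d. cl (of_nat d * v)) ` {0..<n} = residue_classes I"
    using card_subset_eq[OF fin sub] by simp
  have "cl (- b) \<in> residue_classes I" unfolding RC by auto
  then obtain d where "d < n" "cl (-b) = cl (of_nat d * v)" unfolding eq[symmetric] by auto
  hence "of_nat d * v - (- b) \<in> I" using cleq by metis
  thus ?thesis using \<open>d < n\<close> by auto
qed

end



context cnl begin

definition P :: "nat set \<Rightarrow> 'a \<Rightarrow> (nat \<Rightarrow> nat) set" where
  "P J a = {d \<in> PiE J (\<lambda>_. {0..<n}). (\<Sum>j\<in>J. of_nat (d j) * u j) + a \<in> I}"
definition f :: "nat set \<Rightarrow> 'a \<Rightarrow> real" where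
  "f J a = (\<Sum>d\<in>P J a. \<Prod>j\<in>J. real (d j))"

lemma hU_eq: "hU I u J a = (if J = {} then (if a \<in> I then real n - 1 else -1)
   else f J a / real n ^ (card J - 1) - ((real n - 1)/2) ^ card J)"
  unfolding hU_def P_def f_def Let_def by simp

lemma f_empty: "f {} a = (if a \<in> I then 1 else 0)"
  unfolding f_def P_def by auto

lemma finP: "finite J \<Longrightarrow> finite (P J a)"
  unfolding P_def by (rule finite_subset[of _ "PiE J (\<lambda>_. {0..<n})"]) (auto intro: finite_PiE)

lemma memI: "X \<in> I \<Longrightarrow> Y - X \<in> I \<Longrightarrow> Y \<in> I"
  using I_add[OF idl, of "Y - X" X] by simp

lemma sum_upd:
  assumes "finite J" "k \<in> J"
  shows "(\<Sum>j\<in>J. of_nat ((d(k:=e)) j) * u j) = (\<Sum>j\<in>J-{k}. of_nat (d j) * u j) + of_nat e * u k"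
proof -
  have "(\<Sum>j\<in>J. of_nat ((d(k:=e)) j) * u j) = of_nat e * u k + (\<Sum>j\<in>J-{k}. of_nat ((d(k:=e)) j) * u j)"
    by (subst sum.remove[OF assms]) simp
  also have "(\<Sum>j\<in>J-{k}. of_nat ((d(k:=e)) j) * u j) = (\<Sum>j\<in>J-{k}. of_nat (d j) * u j)"
    by (rule sum.cong) auto
  finally show ?thesis by simp
qed

lemma sum_rem:
  assumes "finite J" "k \<in> J"
  shows "(\<Sum>j\<in>J. of_nat (d j) * u j) = (\<Sum>j\<in>J-{k}. of_nat (d j) * u j) + of_nat (d k) * u k"
  using sum_upd[OF assms, of d "d k"] by simp

definition G where "G J k a = (\<Sum>d\<in>P J a. \<Prod>j\<in>J-{k}. real (d j))"
definition Z where "Z J k a = (\<Sum>d\<in>{d\<in>P J a. d k = 0}. \<Prod>j\<in>J-{k}. real (d j))"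

lemma lemA:
  assumes fin: "finite J" and k: "k \<in> J"
  shows "f J (a + u k) = f J a - G J k a + real n * Z J k a"
proof -
  define \<tau> where "\<tau> = (\<lambda>d::nat\<Rightarrow>nat. d(k := (d k + n - 1) mod n))"
  define \<sigma> where "\<sigma> = (\<lambda>d::nat\<Rightarrow>nat. d(k := (d k + 1) mod n))"
  have np: "n > 0" by (rule npos)
  have bij: "bij_betw \<tau> (P J a) (P J (a + u k))"
  proof (rule bij_betw_byWitness[where f'=\<sigma>])
    show "\<forall>d\<in>P J a. \<sigma> (\<tau> d) = d"
    proof
      fix d assume "d \<in> P J a"
      hence "d k < n" using k unfolding P_def by (auto simp: PiE_iff)
      hence "((d k + n - 1) mod n + 1) mod n = d k"
        by (cases "d k") (auto simp: mod_if)
      thus "\<sigma> (\<tau> d) = d" unfolding \<sigma>_def \<tau>_def by auto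
    qed
    show "\<forall>d\<in>P J (a + u k). \<tau> (\<sigma> d) = d"
    proof
      fix d assume "d \<in> P J (a + u k)"
      hence "d k < n" using k unfolding P_def by (auto simp: PiE_iff)
      hence "((d k + 1) mod n + n - 1) mod n = d k"
        by (cases "d k + 1 = n") (auto simp: mod_if)
      thus "\<tau> (\<sigma> d) = d" unfolding \<sigma>_def \<tau>_def by auto
    qed
    show "\<tau> ` P J a \<subseteq> P J (a + u k)"
    proof
      fix d' assume "d' \<in> \<tau> ` P J a"
      then obtain d where d: "d \<in> P J a" "d' = \<tau> d" by auto
      have dP: "d \<in> PiE J (\<lambda>_. {0..<n})" and c: "(\<Sum>j\<in>J. of_nat (d j) * u j) + a \<in> I"
        using d unfolding P_def by auto
      have dk: "d k < n" using dP k by (auto simp: PiE_iff)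
      have m1: "d' \<in> PiE J (\<lambda>_. {0..<n})" using dP k np unfolding d \<tau>_def
        by (metis PiE_fun_upd atLeastLessThan_iff insert_absorb mod_less_divisor zero_le)
      define e where "e = (d k + n - 1) mod n"
      have em: "(e + 1) mod n = d k mod n" unfolding e_def using dk np
        by (cases "d k") (auto simp: mod_if)
      have "((\<Sum>j\<in>J-{k}. of_nat (d j) * u j) + of_nat e * u k + (a + u k))
            - ((\<Sum>j\<in>J-{k}. of_nat (d j) * u j) + of_nat (d k) * u k + a)
            = of_nat (e + 1) * u k - of_nat (d k) * u k" by (simp add: algebra_simps)
      also have "\<dots> \<in> I" using modeq[OF em] .
      finally have "(\<Sum>j\<in>J. of_nat (d' j) * u j) + (a + u k) \<in> I"
        using memI c sum_rem[OF fin k, of d] sum_upd[OF fin k, of d e]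
        unfolding d \<tau>_def e_def by (metis (no_types, lifting))
      thus "d' \<in> P J (a + u k)" using m1 unfolding P_def by auto
    qed
    show "\<sigma> ` P J (a + u k) \<subseteq> P J a"
    proof
      fix d' assume "d' \<in> \<sigma> ` P J (a + u k)"
      then obtain d where d: "d \<in> P J (a + u k)" "d' = \<sigma> d" by auto
      have dP: "d \<in> PiE J (\<lambda>_. {0..<n})" and c: "(\<Sum>j\<in>J. of_nat (d j) * u j) + (a + u k) \<in> I"
        using d unfolding P_def by auto
      have m1: "d' \<in> PiE J (\<lambda>_. {0..<n})" using dP k np unfolding d \<sigma>_def
        by (metis PiE_fun_upd atLeastLessThan_iff insert_absorb mod_less_divisor zero_le)
      define e where "e = (d k + 1) mod n"
      have em: "e mod n = (d k + 1) mod n" unfolding e_def by simp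
      have "((\<Sum>j\<in>J-{k}. of_nat (d j) * u j) + of_nat e * u k + a)
            - ((\<Sum>j\<in>J-{k}. of_nat (d j) * u j) + of_nat (d k) * u k + (a + u k))
            = of_nat e * u k - of_nat (d k + 1) * u k" by (simp add: algebra_simps)
      also have "\<dots> \<in> I" using modeq[OF em] .
      finally have "(\<Sum>j\<in>J. of_nat (d' j) * u j) + a \<in> I"
        using memI c sum_rem[OF fin k, of d] sum_upd[OF fin k, of d e]
        unfolding d \<sigma>_def e_def by (metis (no_types, lifting))
      thus "d' \<in> P J a" using m1 unfolding P_def by auto
    qed
  qed
  have "f J (a + u k) = (\<Sum>d\<in>P J a. \<Prod>j\<in>J. real (\<tau> d j))"
    unfolding f_def using sum.reindex_bij_betw[OF bij, of "\<lambda>d. \<Prod>j\<in>J. real (d j)"] by simp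
  also have "\<dots> = (\<Sum>d\<in>P J a. (real (d k) - 1 + (if d k = 0 then real n else 0)) * (\<Prod>j\<in>J-{k}. real (d j)))"
  proof (rule sum.cong[OF refl])
    fix d assume "d \<in> P J a"
    hence dk: "d k < n" using k unfolding P_def by (auto simp: PiE_iff)
    have "(\<Prod>j\<in>J. real (\<tau> d j)) = real (\<tau> d k) * (\<Prod>j\<in>J-{k}. real (\<tau> d j))"
      using prod.remove[OF fin k] by simp
    also have "(\<Prod>j\<in>J-{k}. real (\<tau> d j)) = (\<Prod>j\<in>J-{k}. real (d j))"
      by (rule prod.cong) (auto simp: \<tau>_def)
    also have "real (\<tau> d k) = real (d k) - 1 + (if d k = 0 then real n else 0)"
      using dk np unfolding \<tau>_def by (cases "d k") (auto simp: mod_if of_nat_diff)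
    finally show "(\<Prod>j\<in>J. real (\<tau> d j)) = (real (d k) - 1 + (if d k = 0 then real n else 0)) * (\<Prod>j\<in>J-{k}. real (d j))" .
  qed
  also have "\<dots> = (\<Sum>d\<in>P J a. real (d k) * (\<Prod>j\<in>J-{k}. real (d j))) - (\<Sum>d\<in>P J a. (\<Prod>j\<in>J-{k}. real (d j)))
      + real n * (\<Sum>d\<in>P J a. if d k = 0 then (\<Prod>j\<in>J-{k}. real (d j)) else 0)"
  proof -
    have "(\<Sum>d\<in>P J a. (real (d k) - 1 + (if d k = 0 then real n else 0)) * (\<Prod>j\<in>J-{k}. real (d j)))
       = (\<Sum>d\<in>P J a. (real (d k) * (\<Prod>j\<in>J-{k}. real (d j)) - (\<Prod>j\<in>J-{k}. real (d j)))
           + real n * (if d k = 0 then (\<Prod>j\<in>J-{k}. real (d j)) else 0))"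
      by (rule sum.cong) (auto simp: algebra_simps)
    also have "\<dots> = (\<Sum>d\<in>P J a. real (d k) * (\<Prod>j\<in>J-{k}. real (d j))) - (\<Sum>d\<in>P J a. (\<Prod>j\<in>J-{k}. real (d j)))
      + real n * (\<Sum>d\<in>P J a. if d k = 0 then (\<Prod>j\<in>J-{k}. real (d j)) else 0)"
      by (simp only: sum.distrib sum_subtractf sum_distrib_left)
    finally show ?thesis .
  qed
  also have "(\<Sum>d\<in>P J a. real (d k) * (\<Prod>j\<in>J-{k}. real (d j))) = f J a"
    unfolding f_def by (rule sum.cong[OF refl], subst prod.remove[OF fin k]) simp
  also have "(\<Sum>d\<in>P J a. if d k = 0 then (\<Prod>j\<in>J-{k}. real (d j)) else 0) = Z J k a"
    unfolding Z_def by (rule sum.inter_filter[OF finP[OF fin], symmetric])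
  finally show ?thesis unfolding G_def .
qed

end



lemma sum_real_upto: "(\<Sum>i\<in>{0..<m}. real i) = real m * (real m - 1) / 2"
  by (induction m) (auto simp: field_simps)

context cnl begin

lemma restrict_eq_fun:
  assumes "d1 \<in> PiE J T" "d2 \<in> PiE J T" "restrict d1 (J-{k}) = restrict d2 (J-{k})" "d1 k = d2 k"
  shows "d1 = d2"
proof
  fix x show "d1 x = d2 x"
  proof (cases "x \<in> J")
    case True
    show ?thesis
    proof (cases "x = k")
      case False
      with True have "restrict d1 (J-{k}) x = restrict d2 (J-{k}) x" using assms(3) by simp
      thus ?thesis using True False by simp
    next
      case True thus ?thesis using assms(4) by simp
    qed
  next
    case False thus ?thesis using PiE_arb[OF assms(1) False] PiE_arb[OF assms(2) False] by simp
  qed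
qed

lemma sum_restr: "(\<Sum>j\<in>J-{k}. of_nat (restrict d (J-{k}) j) * u j) = (\<Sum>j\<in>J-{k}. of_nat (d j) * u j)"
  by (rule sum.cong) auto

lemma prod_restr: "(\<Prod>j\<in>J-{k}. real (restrict d (J-{k}) j)) = (\<Prod>j\<in>J-{k}. real (d j))"
  by (rule prod.cong) auto

lemma restr_upd: "k \<notin> K \<Longrightarrow> e \<in> PiE K T \<Longrightarrow> restrict (e(k := z)) K = e"
proof
  fix x assume a: "k \<notin> K" "e \<in> PiE K T"
  show "restrict (e(k := z)) K x = e x"
  proof (cases "x \<in> K")
    case True thus ?thesis using a by auto
  next
    case False thus ?thesis using a PiE_arb[of e K T x] by simp
  qed
qed

lemma lemG:
  assumes fin: "finite J" and k: "k \<in> J" and pt: "prime_to (u k) I"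
  shows "G J k a = (real n * (real n - 1) / 2) ^ (card J - 1)"
proof -
  define r where "r = (\<lambda>d::nat\<Rightarrow>nat. restrict d (J-{k}))"
  have ins: "insert k (J - {k}) = J" using k by auto
  have inj: "inj_on r (P J a)"
  proof (rule inj_onI)
    fix d1 d2 assume d: "d1 \<in> P J a" "d2 \<in> P J a" "r d1 = r d2"
    have R: "(\<Sum>j\<in>J-{k}. of_nat (d1 j) * u j) = (\<Sum>j\<in>J-{k}. of_nat (d2 j) * u j)"
      using sum_restr[where d=d1 and J=J and k=k] sum_restr[where d=d2 and J=J and k=k] d(3) unfolding r_def by simp
    have c1: "(\<Sum>j\<in>J-{k}. of_nat (d1 j) * u j) + of_nat (d1 k) * u k + a \<in> I"
      using d(1) sum_rem[OF fin k, of d1] unfolding P_def by simp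
    have c2: "(\<Sum>j\<in>J-{k}. of_nat (d1 j) * u j) + of_nat (d2 k) * u k + a \<in> I"
      using d(2) sum_rem[OF fin k, of d2] R unfolding P_def by simp
    have "of_nat (d1 k) * u k - of_nat (d2 k) * u k \<in> I"
      using I_diff[OF idl c1 c2] by (simp add: algebra_simps)
    moreover have "d1 k < n" "d2 k < n" using d k unfolding P_def by (auto simp: PiE_iff)
    ultimately have "d1 k = d2 k" using unit_uniq[OF pt] by blast
    moreover have h: "d1 \<in> PiE J (\<lambda>_. {0..<n})" "d2 \<in> PiE J (\<lambda>_. {0..<n})" using d unfolding P_def by auto
    ultimately show "d1 = d2" using restrict_eq_fun[OF h(1) h(2) d(3)[unfolded r_def]] by blast
  qed
  have img: "r ` P J a = PiE (J-{k}) (\<lambda>_. {0..<n})"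
  proof
    show "r ` P J a \<subseteq> PiE (J-{k}) (\<lambda>_. {0..<n})"
    proof (rule image_subsetI)
      fix d assume "d \<in> P J a"
      hence "\<forall>i\<in>J-{k}. d i \<in> {0..<n}" unfolding P_def by (auto simp: PiE_iff)
      thus "r d \<in> PiE (J-{k}) (\<lambda>_. {0..<n})" unfolding r_def by (simp only: restrict_PiE_iff)
    qed
    show "PiE (J-{k}) (\<lambda>_. {0..<n}) \<subseteq> r ` P J a"
    proof
      fix e assume e: "e \<in> PiE (J-{k}) (\<lambda>_. {0..<n})"
      obtain d0 where d0: "d0 < n" "of_nat d0 * u k + ((\<Sum>j\<in>J-{k}. of_nat (e j) * u j) + a) \<in> I"
        using unit_ex[OF pt] by blast
      have m: "e(k := d0) \<in> PiE J (\<lambda>_. {0..<n})" using PiE_fun_upd[of d0 "\<lambda>_. {0..<n}" k e "J-{k}"] e d0 ins by auto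
      have "(\<Sum>j\<in>J. of_nat ((e(k:=d0)) j) * u j) + a \<in> I"
        using d0(2) sum_upd[OF fin k, of e d0] by (simp add: algebra_simps)
      hence "e(k := d0) \<in> P J a" using m unfolding P_def by auto
      moreover have "r (e(k := d0)) = e" unfolding r_def by (rule restr_upd[OF _ e]) simp
      ultimately show "e \<in> r ` P J a" by (metis image_eqI)
    qed
  qed
  have "G J k a = (\<Sum>d\<in>P J a. (\<Prod>j\<in>J-{k}. real (r d j)))"
    unfolding G_def r_def using prod_restr by simp
  also have "\<dots> = (\<Sum>e\<in>r ` P J a. \<Prod>j\<in>J-{k}. real (e j))"
    using sum.reindex[OF inj, of "\<lambda>e. \<Prod>j\<in>J-{k}. real (e j)"] by simp
  also have "\<dots> = (\<Prod>j\<in>J-{k}. \<Sum>i\<in>{0..<n}. real i)"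
    unfolding img using prod_sum_PiE[of "J-{k}" "\<lambda>_. {0..<n}" "\<lambda>j i. real i"] fin by simp
  also have "\<dots> = (real n * (real n - 1) / 2) ^ (card J - 1)"
    using fin k by (simp add: sum_real_upto)
  finally show ?thesis .
qed

lemma lemZ:
  assumes fin: "finite J" and k: "k \<in> J"
  shows "Z J k a = f (J - {k}) a"
proof -
  define r where "r = (\<lambda>d::nat\<Rightarrow>nat. restrict d (J-{k}))"
  define Q where "Q = {d\<in>P J a. d k = 0}"
  have ins: "insert k (J - {k}) = J" using k by auto
  have inj: "inj_on r Q"
  proof (rule inj_onI)
    fix d1 d2 assume d: "d1 \<in> Q" "d2 \<in> Q" "r d1 = r d2"
    have h: "d1 \<in> PiE J (\<lambda>_. {0..<n})" "d2 \<in> PiE J (\<lambda>_. {0..<n})" "d1 k = d2 k" using d unfolding Q_def P_def by auto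
    show "d1 = d2" using restrict_eq_fun[OF h(1) h(2) d(3)[unfolded r_def] h(3)] .
  qed
  have img: "r ` Q = P (J-{k}) a"
  proof
    show "r ` Q \<subseteq> P (J-{k}) a"
    proof
      fix x assume "x \<in> r ` Q"
      then obtain d where d: "d \<in> Q" "x = r d" by auto
      have dk: "d k = 0" and dc: "(\<Sum>j\<in>J. of_nat (d j) * u j) + a \<in> I" and dP: "d \<in> PiE J (\<lambda>_. {0..<n})"
        using d unfolding Q_def P_def by auto
      have "(\<Sum>j\<in>J-{k}. of_nat (x j) * u j) + a \<in> I"
        using dc sum_restr[where d=d and J=J and k=k] sum_rem[OF fin k, of d] dk unfolding d(2) r_def by simp
      moreover have "\<forall>i\<in>J-{k}. d i \<in> {0..<n}" using dP by (auto simp: PiE_iff)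
      hence "x \<in> PiE (J-{k}) (\<lambda>_. {0..<n})"
        unfolding d(2) r_def by (simp only: restrict_PiE_iff)
      ultimately show "x \<in> P (J-{k}) a" unfolding P_def by auto
    qed
    show "P (J-{k}) a \<subseteq> r ` Q"
    proof
      fix e assume eP: "e \<in> P (J-{k}) a"
      hence e: "e \<in> PiE (J-{k}) (\<lambda>_. {0..<n})" and c: "(\<Sum>j\<in>J-{k}. of_nat (e j) * u j) + a \<in> I"
        unfolding P_def by auto
      have m: "e(k := 0) \<in> PiE J (\<lambda>_. {0..<n})" using PiE_fun_upd[of 0 "\<lambda>_. {0..<n}" k e "J-{k}"] e npos ins by auto
      have "(\<Sum>j\<in>J. of_nat ((e(k:=0)) j) * u j) + a \<in> I"
        using c sum_upd[OF fin k, of e 0] by simp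
      hence "e(k := 0) \<in> Q" using m unfolding Q_def P_def by auto
      moreover have "r (e(k := 0)) = e" unfolding r_def by (rule restr_upd[OF _ e]) simp
      ultimately show "e \<in> r ` Q" by (metis image_eqI)
    qed
  qed
  have "Z J k a = (\<Sum>d\<in>Q. (\<Prod>j\<in>J-{k}. real (r d j)))"
    unfolding Z_def Q_def r_def using prod_restr by simp
  also have "\<dots> = (\<Sum>e\<in>r ` Q. \<Prod>j\<in>J-{k}. real (e j))"
    using sum.reindex[OF inj, of "\<lambda>e. \<Prod>j\<in>J-{k}. real (e j)"] by simp
  also have "\<dots> = f (J - {k}) a" unfolding img f_def ..
  finally show ?thesis .
qed

end



context cnl begin

lemma lemD:
  assumes fin: "finite J" and k: "k \<in> J" and pt: "prime_to (u k) I"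
  shows "hU I u J (a + u k) = hU I u J a + hU I u (J - {k}) a"
proof -
  have A: "f J (a + u k) - f J a = real n * f (J-{k}) a - (real n * (real n - 1) / 2) ^ (card J - 1)"
    using lemA[OF fin k, of a] lemG[OF fin k pt, of a] lemZ[OF fin k, of a] by simp
  have cJ: "card J = Suc (card (J - {k}))" using card_Suc_Diff1[OF fin k] by simp
  have Jne: "J \<noteq> {}" using k by auto
  have np: "real n > 0" using npos by simp
  show ?thesis
  proof (cases "J - {k} = {}")
    case True
    hence c1: "card J = 1" using cJ by (metis One_nat_def card.empty)
    show ?thesis using A unfolding hU_eq[of J] hU_eq[of "J - {k}"] using True c1 Jne
      by (simp add: f_empty algebra_simps)
  next
    case False
    hence "card (J - {k}) > 0" using fin by (simp add: card_gt_0_iff)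
    then obtain m where m: "card (J - {k}) = Suc m" using gr0_implies_Suc by blast
    have key: "(real n * (real n - 1) / 2) ^ Suc m = real n ^ Suc m * ((real n - 1) / 2) ^ Suc m"
      by (simp add: power_mult_distrib[symmetric])
    have "hU I u J (a + u k) - hU I u J a = (f J (a + u k) - f J a) / real n ^ Suc m"
      unfolding hU_eq[of J] using Jne cJ m by (simp add: diff_divide_distrib)
    also have "\<dots> = (real n * f (J-{k}) a - real n ^ Suc m * ((real n - 1) / 2) ^ Suc m) / real n ^ Suc m"
      using A cJ m key by simp
    also have "\<dots> = f (J-{k}) a / real n ^ m - ((real n - 1) / 2) ^ Suc m"
      using np by (simp add: field_simps)
    also have "\<dots> = hU I u (J - {k}) a" unfolding hU_eq[of "J - {k}"] using False m by simp
    finally show ?thesis by simp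
  qed
qed

lemma lemE:
  assumes fin: "finite J" and k: "k \<in> J" and pt: "prime_to (u k) I"
  shows "hU I u J (a + of_nat l * u k) = hU I u J a + (\<Sum>e<l. hU I u (J - {k}) (a + of_nat e * u k))"
proof (induction l)
  case 0 then show ?case by simp
next
  case (Suc l)
  have "hU I u J (a + of_nat (Suc l) * u k) = hU I u J ((a + of_nat l * u k) + u k)"
    by (rule arg_cong[where f="hU I u J"]) (simp add: algebra_simps)
  also have "\<dots> = hU I u J (a + of_nat l * u k) + hU I u (J - {k}) (a + of_nat l * u k)"
    by (rule lemD[OF fin k pt])
  finally have "hU I u J (a + of_nat (Suc l) * u k) = hU I u J (a + of_nat l * u k) + hU I u (J - {k}) (a + of_nat l * u k)" .
  thus ?case using Suc by simp
qed

end



context cnl begin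

lemma Tinsert:
  assumes kS: "k \<notin> S" and finS: "finite S"
  shows "(\<Sum>d\<in>PiE (insert k S) (\<lambda>j. {0..<l j}). H (x + (\<Sum>j\<in>insert k S. of_nat (d j) * u j)))
       = (\<Sum>g\<in>PiE S (\<lambda>j. {0..<l j}). \<Sum>e<l k. H (x + (\<Sum>j\<in>S. of_nat (g j) * u j) + of_nat e * u k))"
proof -
  have "(\<Sum>d\<in>PiE (insert k S) (\<lambda>j. {0..<l j}). H (x + (\<Sum>j\<in>insert k S. of_nat (d j) * u j)))
     = (\<Sum>p\<in>{0..<l k} \<times> PiE S (\<lambda>j. {0..<l j}). H (x + (\<Sum>j\<in>insert k S. of_nat (((snd p)(k := fst p)) j) * u j)))"
    unfolding PiE_insert_eq
    by (subst sum.reindex[OF inj_combinator[OF kS]]) (simp add: case_prod_beta)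
  also have "\<dots> = (\<Sum>p\<in>{0..<l k} \<times> PiE S (\<lambda>j. {0..<l j}). H (x + (\<Sum>j\<in>S. of_nat (snd p j) * u j) + of_nat (fst p) * u k))"
  proof (rule sum.cong[OF refl])
    fix p :: "nat \<times> (nat \<Rightarrow> nat)"
    have "(\<Sum>j\<in>insert k S. of_nat (((snd p)(k := fst p)) j) * u j)
        = of_nat (fst p) * u k + (\<Sum>j\<in>S. of_nat (((snd p)(k := fst p)) j) * u j)"
      by (subst sum.insert[OF finS kS]) simp
    also have "(\<Sum>j\<in>S. of_nat (((snd p)(k := fst p)) j) * u j) = (\<Sum>j\<in>S. of_nat (snd p j) * u j)"
      by (rule sum.cong) (use kS in auto)
    finally show "H (x + (\<Sum>j\<in>insert k S. of_nat (((snd p)(k := fst p)) j) * u j))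
        = H (x + (\<Sum>j\<in>S. of_nat (snd p j) * u j) + of_nat (fst p) * u k)"
      by (simp add: algebra_simps)
  qed
  also have "\<dots> = (\<Sum>e\<in>{0..<l k}. \<Sum>g\<in>PiE S (\<lambda>j. {0..<l j}). H (x + (\<Sum>j\<in>S. of_nat (g j) * u j) + of_nat e * u k))"
    by (subst sum.cartesian_product) (simp add: case_prod_beta)
  also have "\<dots> = (\<Sum>g\<in>PiE S (\<lambda>j. {0..<l j}). \<Sum>e<l k. H (x + (\<Sum>j\<in>S. of_nat (g j) * u j) + of_nat e * u k))"
    by (subst sum.swap) (simp add: lessThan_atLeast0)
  finally show ?thesis .
qed

lemma lemF:
  assumes fin: "finite J" and pts: "\<forall>j\<in>J. prime_to (u j) I" and K: "finite K" "K \<subseteq> J"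
  shows "hU I u J (x + (\<Sum>j\<in>K. of_nat (l j) * u j)) =
    (\<Sum>S\<in>Pow K. \<Sum>d\<in>PiE S (\<lambda>j. {0..<l j}). hU I u (J - S) (x + (\<Sum>j\<in>S. of_nat (d j) * u j)))"
  using K
proof (induction K arbitrary: x rule: finite_induct)
  case empty
  then show ?case by simp
next
  case (insert k K)
  define T where "T = (\<lambda>S. \<Sum>d\<in>PiE S (\<lambda>j. {0..<l j}). hU I u (J - S) (x + (\<Sum>j\<in>S. of_nat (d j) * u j)))"
  have kJ: "k \<in> J" and KJ: "K \<subseteq> J" using insert by auto
  have "hU I u J (x + (\<Sum>j\<in>insert k K. of_nat (l j) * u j)) = hU I u J ((x + of_nat (l k) * u k) + (\<Sum>j\<in>K. of_nat (l j) * u j))"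
    using insert(1,2) by (simp add: algebra_simps)
  also have "\<dots> = (\<Sum>S\<in>Pow K. \<Sum>d\<in>PiE S (\<lambda>j. {0..<l j}). hU I u (J - S) ((x + of_nat (l k) * u k) + (\<Sum>j\<in>S. of_nat (d j) * u j)))"
    using insert(3)[OF KJ] .
  also have "\<dots> = (\<Sum>S\<in>Pow K. T S + (\<Sum>d\<in>PiE S (\<lambda>j. {0..<l j}). \<Sum>e<l k. hU I u (J - insert k S) (x + (\<Sum>j\<in>S. of_nat (d j) * u j) + of_nat e * u k)))"
  proof (rule sum.cong[OF refl])
    fix S assume S: "S \<in> Pow K"
    have kS: "k \<in> J - S" using S insert(2) kJ by auto
    have "(\<Sum>d\<in>PiE S (\<lambda>j. {0..<l j}). hU I u (J - S) ((x + of_nat (l k) * u k) + (\<Sum>j\<in>S. of_nat (d j) * u j)))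
      = (\<Sum>d\<in>PiE S (\<lambda>j. {0..<l j}). hU I u (J - S) (x + (\<Sum>j\<in>S. of_nat (d j) * u j))
           + (\<Sum>e<l k. hU I u (J - S - {k}) (x + (\<Sum>j\<in>S. of_nat (d j) * u j) + of_nat e * u k)))"
    proof (rule sum.cong[OF refl])
      fix d
      have "hU I u (J - S) ((x + of_nat (l k) * u k) + (\<Sum>j\<in>S. of_nat (d j) * u j))
         = hU I u (J - S) ((x + (\<Sum>j\<in>S. of_nat (d j) * u j)) + of_nat (l k) * u k)"
        by (simp add: algebra_simps)
      also have "\<dots> = hU I u (J - S) (x + (\<Sum>j\<in>S. of_nat (d j) * u j))
           + (\<Sum>e<l k. hU I u (J - S - {k}) (x + (\<Sum>j\<in>S. of_nat (d j) * u j) + of_nat e * u k))"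
        using lemE[of "J - S" k] fin kS pts kJ by simp
      finally show "hU I u (J - S) ((x + of_nat (l k) * u k) + (\<Sum>j\<in>S. of_nat (d j) * u j))
         = hU I u (J - S) (x + (\<Sum>j\<in>S. of_nat (d j) * u j))
           + (\<Sum>e<l k. hU I u (J - S - {k}) (x + (\<Sum>j\<in>S. of_nat (d j) * u j) + of_nat e * u k))" .
    qed
    also have "\<dots> = T S + (\<Sum>d\<in>PiE S (\<lambda>j. {0..<l j}). \<Sum>e<l k. hU I u (J - insert k S) (x + (\<Sum>j\<in>S. of_nat (d j) * u j) + of_nat e * u k))"
    proof -
      have e: "J - S - {k} = J - insert k S" by auto
      show ?thesis by (simp only: T_def sum.distrib e)
    qed
    finally show "(\<Sum>d\<in>PiE S (\<lambda>j. {0..<l j}). hU I u (J - S) ((x + of_nat (l k) * u k) + (\<Sum>j\<in>S. of_nat (d j) * u j)))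
      = T S + (\<Sum>d\<in>PiE S (\<lambda>j. {0..<l j}). \<Sum>e<l k. hU I u (J - insert k S) (x + (\<Sum>j\<in>S. of_nat (d j) * u j) + of_nat e * u k))" .
  qed
  also have "\<dots> = (\<Sum>S\<in>Pow K. T S) + (\<Sum>S\<in>Pow K. T (insert k S))"
  proof -
    have "(\<Sum>d\<in>PiE S (\<lambda>j. {0..<l j}). \<Sum>e<l k. hU I u (J - insert k S) (x + (\<Sum>j\<in>S. of_nat (d j) * u j) + of_nat e * u k))
        = T (insert k S)" if "S \<in> Pow K" for S
    proof -
      have "k \<notin> S" "finite S" using that insert(1,2) finite_subset by auto
      thus ?thesis unfolding T_def using Tinsert[where k=k and S=S and l=l and H="hU I u (J - insert k S)" and x=x] by simp
    qed
    thus ?thesis by (simp add: sum.distrib)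
  qed
  also have "(\<Sum>S\<in>Pow K. T (insert k S)) = (\<Sum>S\<in>insert k ` Pow K. T S)"
  proof -
    have "inj_on (insert k) (Pow K)"
    proof (rule inj_onI)
      fix A B assume "A \<in> Pow K" "B \<in> Pow K" "insert k A = insert k B"
      thus "A = B" using insert(2) by (metis PowD Diff_insert_absorb subsetD)
    qed
    thus ?thesis by (simp add: sum.reindex)
  qed
  also have "(\<Sum>S\<in>Pow K. T S) + (\<Sum>S\<in>insert k ` Pow K. T S) = (\<Sum>S\<in>Pow (insert k K). T S)"
  proof -
    have "Pow K \<inter> insert k ` Pow K = {}" using insert(2) by auto
    moreover have "finite (Pow K)" using insert(1) by simp
    ultimately show ?thesis unfolding Pow_insert by (simp add: sum.union_disjoint)
  qed
  finally show ?case unfolding T_def .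
qed

end


theorem corollary2p2:
  fixes I :: "'a::comm_ring_1 set" and u :: "nat \<Rightarrow> 'a" and r :: nat
    and x :: 'a and l :: "nat \<Rightarrow> nat"
  assumes "cassou_nogues I"
    and "r \<ge> 1"
    and "inj_on u {0..<r}"
    and "\<forall>j<r. prime_to (u j) I"
  shows "hU I u {0..<r} (x + (\<Sum>j<r. of_nat (l j) * u j)) =
         hU I u {0..<r} x +
         (\<Sum>S \<in> Pow {0..<r} - {{}}.
            \<Sum>d \<in> PiE S (\<lambda>j. {0..<l j}).
               hU I u ({0..<r} - S) (x + (\<Sum>j\<in>S. of_nat (d j) * u j)))"
proof -
  interpret cnl I u using assms(1) by unfold_locales
  have pts: "\<forall>j\<in>{0..<r}. prime_to (u j) I" using assms(4) by auto
  have "hU I u {0..<r} (x + (\<Sum>j<r. of_nat (l j) * u j)) = hU I u {0..<r} (x + (\<Sum>j\<in>{0..<r}. of_nat (l j) * u j))"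
    by (simp only: lessThan_atLeast0)
  also have "\<dots> = (\<Sum>S\<in>Pow {0..<r}. \<Sum>d\<in>PiE S (\<lambda>j. {0..<l j}). hU I u ({0..<r} - S) (x + (\<Sum>j\<in>S. of_nat (d j) * u j)))"
    by (rule lemF[OF _ pts]) auto
  also have "\<dots> = (\<Sum>d\<in>PiE {} (\<lambda>j. {0..<l j}). hU I u ({0..<r} - {}) (x + (\<Sum>j\<in>{}. of_nat (d j) * u j)))
      + (\<Sum>S \<in> Pow {0..<r} - {{}}. \<Sum>d \<in> PiE S (\<lambda>j. {0..<l j}). hU I u ({0..<r} - S) (x + (\<Sum>j\<in>S. of_nat (d j) * u j)))"
    by (rule sum.remove) auto
  also have "(\<Sum>d\<in>PiE {} (\<lambda>j. {0..<l j}). hU I u ({0..<r} - {}) (x + (\<Sum>j\<in>{}. of_nat (d j) * u j))) = hU I u {0..<r} x"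
    by simp
  finally show ?thesis .
qed

end
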